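(* Let $1<\beta\le2$ and set $\mathrm{ei}_\beta(y)=\mathrm{cpr}_\beta(y)-\tfrac12$ for $y\in[0,1]$. Then for all $0\le y<\beta/2$, $$[\mathcal P_\beta\,\mathrm{ei}_\beta](y)=\frac1\beta\,\mathrm{ei}_\beta(y).$$
   Context: $T_\beta(x)=\beta x$ for $0\le x<\tfrac12$, $T_\beta(x)=\beta(x-\tfrac12)$ for $\tfrac12\le x\le1$; $k_n(x)=0$ if $T_\beta^n(x)<\tfrac12$ and $1$ otherwise; $\mathrm{cpr}_\beta(y)=\sum_{n\ge0}k_n(y)2^{-n-1}$. For a function $f$ on $[0,1]$, the operator $\mathcal P_\beta$ is $[\mathcal P_\beta f](y)=\frac1\beta\left[f\!\left(\frac y\beta\right)+f\!\left(\frac y\beta+\frac12\right)\right]$, $0\le y\le\beta/2$. *)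

theory Defs
  imports "HOL-Analysis.Analysis"
begin

definition T :: "real \<Rightarrow> real \<Rightarrow> real" where
  "T \<beta> x = (if x < 1/2 then \<beta> * x else \<beta> * (x - 1/2))"

definition kdig :: "real \<Rightarrow> nat \<Rightarrow> real \<Rightarrow> real" where
  "kdig \<beta> n x = (if (T \<beta> ^^ n) x < 1/2 then 0 else 1)"

definition cpr :: "real \<Rightarrow> real \<Rightarrow> real" where
  "cpr \<beta> y = (\<Sum>n. kdig \<beta> n y * (1/2) ^ (n+1))"

definition ei :: "real \<Rightarrow> real \<Rightarrow> real" where
  "ei \<beta> y = cpr \<beta> y - 1/2"

definition Pop :: "real \<Rightarrow> (real \<Rightarrow> real) \<Rightarrow> real \<Rightarrow> real" where
  "Pop \<beta> f y = (1/\<beta>) * (f (y/\<beta>) + f (y/\<beta> + 1/2))"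

end

theory Submission
  imports Defs
begin
lemma kdig_summable: "summable (\<lambda>n. kdig \<beta> n y * (1/2::real) ^ (n+1))"
proof (rule summable_comparison_test[of _ "\<lambda>n. (1/2::real)^(n+1)"])
  show "\<exists>N. \<forall>n\<ge>N. norm (kdig \<beta> n y * (1/2::real) ^ (n+1)) \<le> (1/2) ^ (n+1)"
    by (auto simp: kdig_def)
  show "summable (\<lambda>n. (1/2::real)^(n+1))"
    using summable_geometric[of "1/2::real"] by (simp add: summable_mult2 power_Suc2)
qed

lemma kdig_Suc:
  assumes "T \<beta> x = y"
  shows "kdig \<beta> (Suc n) x = kdig \<beta> n y"
proof -
  have "(T \<beta> ^^ Suc n) x = (T \<beta> ^^ n) y"
    using assms by (simp only: funpow_Suc_right comp_apply)
  then show ?thesis unfolding kdig_def by simp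
qed

lemma cpr_shift:
  assumes "T \<beta> x = y"
  shows "cpr \<beta> x = kdig \<beta> 0 x / 2 + cpr \<beta> y / 2"
proof -
  have s: "summable (\<lambda>n. kdig \<beta> n x * (1/2::real) ^ (n+1))" by (rule kdig_summable)
  have 1: "cpr \<beta> x = kdig \<beta> 0 x * (1/2) ^ (0+1) + (\<Sum>n. kdig \<beta> (Suc n) x * (1/2::real) ^ (Suc n+1))"
    unfolding cpr_def using suminf_split_head[OF s] by linarith
  have 2: "(\<Sum>n. kdig \<beta> (Suc n) x * (1/2::real) ^ (Suc n+1)) = (\<Sum>n. (kdig \<beta> n y * (1/2::real) ^ (n+1)) / 2)"
    by (rule suminf_cong) (simp add: kdig_Suc[OF assms])
  have 3: "(\<Sum>n. (kdig \<beta> n y * (1/2::real) ^ (n+1)) / 2) = cpr \<beta> y / 2"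
    unfolding cpr_def using suminf_divide[OF kdig_summable[of \<beta> y], of 2] by simp
  show ?thesis using 1 2 3 by simp
qed
theorem mainTheorem6:
  fixes \<beta> y :: real
  assumes "1 < \<beta>" and "\<beta> \<le> 2" and "0 \<le> y" and "y < \<beta>/2"
  shows "Pop \<beta> (ei \<beta>) y = (1/\<beta>) * ei \<beta> y"
proof -
  have b: "\<beta> > 0" using assms by simp
  have l: "y/\<beta> < 1/2" using assms b by (simp add: field_simps)
  have t1: "T \<beta> (y/\<beta>) = y" using l b by (simp add: T_def)
  have t2: "T \<beta> (y/\<beta> + 1/2) = y" using b assms by (simp add: T_def field_simps)
  have k1: "kdig \<beta> 0 (y/\<beta>) = 0" using l by (simp add: kdig_def)
  have "y/\<beta> \<ge> 0" using assms b by (simp add: divide_nonneg_pos)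
  have k2: "kdig \<beta> 0 (y/\<beta> + 1/2) = 1" proof -
    have "\<not> y/\<beta> + 1/2 < 1/2" using \<open>y/\<beta> \<ge> 0\<close> by linarith
    then show ?thesis by (simp only: kdig_def funpow_0 if_False)
  qed
  show ?thesis
    unfolding Pop_def ei_def cpr_shift[OF t1] cpr_shift[OF t2] k1 k2
    by (simp add: algebra_simps)
qed

end
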